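(* On the noncommutative space $\mathbb{R}^4_\theta$ described in the context, the pair $(\nabla,\sigma)$, where $\nabla:\Omega^1_A\to\Omega^1_A\otimes_A\Omega^1_A$ is given by $\nabla(\sum_ia_i\,\mathrm{d}z^i)=\sum_i\mathrm{d}a_i\otimes_A\mathrm{d}z^i$ (i.e. $\nabla(\mathrm{d}z^i)=0$ plus the left Leibniz rule) and $\sigma:\Omega^1_A\otimes_A\Omega^1_A\to\Omega^1_A\otimes_A\Omega^1_A$ is the left $A$-linear map with $\sigma(\mathrm{d}z^i\otimes_A\mathrm{d}z^j)=R^{ji}\,\mathrm{d}z^j\otimes_A\mathrm{d}z^i$, is a bimodule connection on $\Omega^1_A$.
   Context: Let $\theta\in\mathbb{R}$ and $R=(R^{ab})$ the $4\times4$ matrix (row $a$, column $b$) with rows $(1,e^{-i\theta},1,e^{i\theta})$, $(e^{i\theta},1,e^{-i\theta},1)$, $(1,e^{i\theta},1,e^{-i\theta})$, $(e^{-i\theta},1,e^{i\theta},1)$. Let $A=\mathbb{C}\langle z^1,\dots,z^4\rangle/(z^iz^j-R^{ji}z^jz^i)$, $\Omega^1_A=\bigoplus_{i=1}^4A\,\mathrm{d}z^i$ the free left $A$-module with right action determined by $\mathrm{d}z^i\,z^j=R^{ji}z^j\,\mathrm{d}z^i$, and $\mathrm{d}:A\to\Omega^1_A$ with $z^i\mapsto\mathrm{d}z^i$ extended by the Leibniz rule. A bimodule connection on an $A$-bimodule $V$ is a pair $(\nabla,\sigma)$ of a linear map $\nabla:V\to\Omega^1_A\otimes_AV$ and an $A$-bimodule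 isomorphism $\sigma:V\otimes_A\Omega^1_A\to\Omega^1_A\otimes_AV$ with $\nabla(av)=a\nabla(v)+\mathrm{d}a\otimes_Av$ and $\nabla(va)=\nabla(v)a+\sigma(v\otimes_A\mathrm{d}a)$ for all $a\in A$, $v\in V$. *)

theory Defs
  imports Complex_Main "HOL-Library.Poly_Mapping" "HOL-Library.Numeral_Type"
    "HOL-Library.Function_Algebras"
begin

text \<open>Indices 1..4 of the paper are represented by the elements 0,1,2,3 of the
  finite numeral type 4.  The matrix R (row a, column b).\<close>

definition idx4 :: "4 \<Rightarrow> nat" where
  "idx4 a = nat (Rep_bit0 a)"

definition Rmat :: "real \<Rightarrow> 4 \<Rightarrow> 4 \<Rightarrow> complex" where
  "Rmat \<theta> a b =
     (let p = cis \<theta>; m = cis (- \<theta>) in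
      [[1, m, 1, p],
       [p, 1, m, 1],
       [1, p, 1, m],
       [m, 1, p, 1]] ! idx4 a ! idx4 b)"

text \<open>The algebra A = C<z1..z4>/(z^i z^j - R^{ji} z^j z^i), realised on its basis of
  ordered monomials z1^{n1} z2^{n2} z3^{n3} z4^{n4} (exponent vectors 4 => nat).  The product of ordered
  monomials is obtained by reordering with the defining relations
  (z^j z^i = R^{ij} z^i z^j for i < j).\<close>

type_synonym mono = "4 \<Rightarrow> nat"
type_synonym alg = "mono \<Rightarrow>\<^sub>0 complex"

definition phase :: "real \<Rightarrow> mono \<Rightarrow> mono \<Rightarrow> complex" where
  "phase \<theta> m n = (\<Prod>i\<in>UNIV. \<Prod>j\<in>{j. i < j}. Rmat \<theta> i j ^ (m j * n i))"

definition amul :: "real \<Rightarrow> alg \<Rightarrow> alg \<Rightarrow> alg" where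
  "amul \<theta> p q = (\<Sum>m\<in>Poly_Mapping.keys p. \<Sum>n\<in>Poly_Mapping.keys q.
      Poly_Mapping.single (\<lambda>k. m k + n k) (Poly_Mapping.lookup p m * Poly_Mapping.lookup q n * phase \<theta> m n))"

definition asc :: "complex \<Rightarrow> alg \<Rightarrow> alg" where
  "asc c p = Poly_Mapping.map (\<lambda>x. c * x) p"

definition aone :: alg where
  "aone = Poly_Mapping.single (\<lambda>_. 0) 1"

definition zgen :: "4 \<Rightarrow> alg" where
  "zgen i = Poly_Mapping.single (\<lambda>k. if k = i then 1 else 0) 1"

text \<open>Omega^1: free left A-module with basis dz^i; an element sum_i a_i dz^i is the
  coefficient function i => a_i.\<close>

type_synonym om1 = "4 \<Rightarrow> alg"

definition dz :: "4 \<Rightarrow> om1" where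
  "dz i = (\<lambda>k. if k = i then aone else 0)"

definition lact1 :: "real \<Rightarrow> alg \<Rightarrow> om1 \<Rightarrow> om1" where
  "lact1 \<theta> a w = (\<lambda>i. amul \<theta> a (w i))"

text \<open>Right action determined by dz^i z^j = R^{ji} z^j dz^i: moving dz^i past an
  ordered monomial z^n multiplies by prod_j (R^{ji})^{n_j}.\<close>

definition twist :: "real \<Rightarrow> 4 \<Rightarrow> alg \<Rightarrow> alg" where
  "twist \<theta> i b = (\<Sum>n\<in>Poly_Mapping.keys b.
      Poly_Mapping.single n (Poly_Mapping.lookup b n * (\<Prod>j\<in>UNIV. Rmat \<theta> j i ^ n j)))"

definition ract1 :: "real \<Rightarrow> om1 \<Rightarrow> alg \<Rightarrow> om1" where
  "ract1 \<theta> w b = (\<lambda>i. amul \<theta> (w i) (twist \<theta> i b))"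

definition dA :: "real \<Rightarrow> alg \<Rightarrow> om1" where
  "dA \<theta> = (THE d. (\<forall>i. d (zgen i) = dz i)
       \<and> (\<forall>a b. d (amul \<theta> a b) = ract1 \<theta> (d a) b + lact1 \<theta> a (d b))
       \<and> (\<forall>a b. d (a + b) = d a + d b)
       \<and> (\<forall>c a. d (asc c a) = (\<lambda>i. asc c (d a i))))"

text \<open>Omega^1 (x)_A Omega^1: since Omega^1 is free as a left A-module on dz^j,
  it is the free left A-module on dz^i (x) dz^j; an element is (i,j) => coefficient.\<close>

type_synonym om2 = "4 \<Rightarrow> 4 \<Rightarrow> alg"

text \<open>Elementary tensor: w (x) (sum_j b_j dz^j) = sum_j (w b_j) (x) dz^j.\<close>

definition tens :: "real \<Rightarrow> om1 \<Rightarrow> om1 \<Rightarrow> om2" where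
  "tens \<theta> w v = (\<lambda>i j. ract1 \<theta> w (v j) i)"

definition lact2 :: "real \<Rightarrow> alg \<Rightarrow> om2 \<Rightarrow> om2" where
  "lact2 \<theta> a X = (\<lambda>i j. amul \<theta> a (X i j))"

definition ract2 :: "real \<Rightarrow> om2 \<Rightarrow> alg \<Rightarrow> om2" where
  "ract2 \<theta> X b = (\<lambda>p q. \<Sum>i\<in>UNIV. \<Sum>j\<in>UNIV.
      tens \<theta> (lact1 \<theta> (X i j) (dz i)) (ract1 \<theta> (dz j) b) p q)"

definition asc2 :: "complex \<Rightarrow> om2 \<Rightarrow> om2" where
  "asc2 c X = (\<lambda>i j. asc c (X i j))"

definition asc1 :: "complex \<Rightarrow> om1 \<Rightarrow> om1" where
  "asc1 c w = (\<lambda>i. asc c (w i))"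

text \<open>Bimodule connection on V = Omega^1 (so V (x)_A Omega^1 = Omega^1 (x)_A V = om2).\<close>

definition bimodule_connection :: "real \<Rightarrow> (om1 \<Rightarrow> om2) \<Rightarrow> (om2 \<Rightarrow> om2) \<Rightarrow> bool" where
  "bimodule_connection \<theta> nabla sigma \<longleftrightarrow>
     (\<forall>v w. nabla (v + w) = nabla v + nabla w)
   \<and> (\<forall>c v. nabla (asc1 c v) = asc2 c (nabla v))
   \<and> (\<forall>X Y. sigma (X + Y) = sigma X + sigma Y)
   \<and> (\<forall>a X. sigma (lact2 \<theta> a X) = lact2 \<theta> a (sigma X))
   \<and> (\<forall>a X. sigma (ract2 \<theta> X a) = ract2 \<theta> (sigma X) a)
   \<and> bij sigma
   \<and> (\<forall>a v. nabla (lact1 \<theta> a v) = lact2 \<theta> a (nabla v) + tens \<theta> (dA \<theta> a) v)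
   \<and> (\<forall>a v. nabla (ract1 \<theta> v a) = ract2 \<theta> (nabla v) a + sigma (tens \<theta> v (dA \<theta> a)))"

definition nablaR :: "real \<Rightarrow> om1 \<Rightarrow> om2" where
  "nablaR \<theta> w = (\<lambda>p q. \<Sum>i\<in>UNIV. tens \<theta> (dA \<theta> (w i)) (dz i) p q)"

text \<open>sigma: left A-linear with sigma(dz^i (x) dz^j) = R^{ji} dz^j (x) dz^i,
  i.e. the coefficient of dz^p (x) dz^q in sigma(X) is R^{pq} X_{qp}.\<close>

definition sigmaR :: "real \<Rightarrow> om2 \<Rightarrow> om2" where
  "sigmaR \<theta> X = (\<lambda>p q. \<Sum>i\<in>UNIV. \<Sum>j\<in>UNIV.
      lact2 \<theta> (X i j) (asc2 (Rmat \<theta> j i) (tens \<theta> (dz j) (dz i))) p q)"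

end

theory Submission
  imports Defs
begin


lemma pm_decomp: "(a::'a \<Rightarrow>\<^sub>0 'b::comm_monoid_add) = (\<Sum>n\<in>Poly_Mapping.keys a. Poly_Mapping.single n (Poly_Mapping.lookup a n))"
proof (rule poly_mapping_eqI)
  fix k
  show "Poly_Mapping.lookup a k = Poly_Mapping.lookup (\<Sum>n\<in>Poly_Mapping.keys a. Poly_Mapping.single n (Poly_Mapping.lookup a n)) k"
    by (simp add: lookup_sum lookup_single when_def in_keys_iff)
qed

lemma pm_induct[case_names zero single add]:
  assumes "P 0" "\<And>k c. P (Poly_Mapping.single k c)" "\<And>a b. P a \<Longrightarrow> P b \<Longrightarrow> P (a + b)"
  shows "P (a::'a \<Rightarrow>\<^sub>0 'b::comm_monoid_add)"
proof -
  have "P (\<Sum>n\<in>S. Poly_Mapping.single n (Poly_Mapping.lookup a n))" if "finite S" for S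
    using that by (induction S rule: finite_induct) (auto intro: assms)
  then show ?thesis by (subst pm_decomp) simp
qed

lemma sum_sup:
  assumes "finite S" "Poly_Mapping.keys a \<subseteq> S" "\<And>n. f n 0 = 0"
  shows "(\<Sum>n\<in>Poly_Mapping.keys a. f n (Poly_Mapping.lookup a n)) = (\<Sum>n\<in>S. f n (Poly_Mapping.lookup a n))"
  by (rule sum.mono_neutral_left) (use assms in \<open>auto simp: in_keys_iff\<close>)

lemma amul_sup:
  assumes "finite S" "Poly_Mapping.keys p \<subseteq> S" "finite T" "Poly_Mapping.keys q \<subseteq> T"
  shows "amul \<theta> p q = (\<Sum>m\<in>S. \<Sum>n\<in>T.
      Poly_Mapping.single (\<lambda>k. m k + n k) (Poly_Mapping.lookup p m * Poly_Mapping.lookup q n * phase \<theta> m n))"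
proof -
  show ?thesis
  proof -
    have "amul \<theta> p q = (\<Sum>m\<in>Poly_Mapping.keys p. \<Sum>n\<in>T.
      Poly_Mapping.single (\<lambda>k. m k + n k) (Poly_Mapping.lookup p m * Poly_Mapping.lookup q n * phase \<theta> m n))"
      unfolding amul_def
      by (rule sum.cong[OF refl], rule sum.mono_neutral_left) (use assms in \<open>auto simp: in_keys_iff\<close>)
    also have "\<dots> = (\<Sum>m\<in>S. \<Sum>n\<in>T.
      Poly_Mapping.single (\<lambda>k. m k + n k) (Poly_Mapping.lookup p m * Poly_Mapping.lookup q n * phase \<theta> m n))"
      by (rule sum.mono_neutral_left) (use assms in \<open>auto simp: in_keys_iff\<close>)
    finally show ?thesis .
  qed
qed

lemma amul_add_left: "amul \<theta> (p + p') q = amul \<theta> p q + amul \<theta> p' q"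
proof -
  let ?S = "Poly_Mapping.keys p \<union> Poly_Mapping.keys p'"
  have "amul \<theta> (p + p') q = (\<Sum>m\<in>?S. \<Sum>n\<in>Poly_Mapping.keys q.
      Poly_Mapping.single (\<lambda>k. m k + n k) (Poly_Mapping.lookup (p+p') m * Poly_Mapping.lookup q n * phase \<theta> m n))"
    by (rule amul_sup) (auto simp: keys_add)
  also have "\<dots> = amul \<theta> p q + amul \<theta> p' q"
    by (subst (1 2) amul_sup[where S = ?S and T = "Poly_Mapping.keys q"])
       (auto simp: lookup_add algebra_simps single_add sum.distrib)
  finally show ?thesis .
qed

lemma amul_add_right: "amul \<theta> p (q + q') = amul \<theta> p q + amul \<theta> p q'"
proof -
  let ?T = "Poly_Mapping.keys q \<union> Poly_Mapping.keys q'"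
  have "amul \<theta> p (q + q') = (\<Sum>m\<in>Poly_Mapping.keys p. \<Sum>n\<in>?T.
      Poly_Mapping.single (\<lambda>k. m k + n k) (Poly_Mapping.lookup p m * Poly_Mapping.lookup (q+q') n * phase \<theta> m n))"
    by (rule amul_sup) (auto simp: keys_add)
  also have "\<dots> = amul \<theta> p q + amul \<theta> p q'"
    by (subst (1 2) amul_sup[where S = "Poly_Mapping.keys p" and T = ?T])
       (auto simp: lookup_add algebra_simps single_add sum.distrib)
  finally show ?thesis .
qed

lemma amul_zero_left[simp]: "amul \<theta> 0 q = 0" by (simp add: amul_def)
lemma amul_zero_right[simp]: "amul \<theta> p 0 = 0" by (simp add: amul_def)

lemma amul_single: "amul \<theta> (Poly_Mapping.single m c) (Poly_Mapping.single n d) =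
   Poly_Mapping.single (\<lambda>k. m k + n k) (c * d * phase \<theta> m n)"
  by (subst amul_sup[where S = "{m}" and T = "{n}"]) auto

lemma asc_single[simp]: "asc c (Poly_Mapping.single n d) = Poly_Mapping.single n (c * d)"
  by (simp add: asc_def)
lemma lookup_asc[simp]: "Poly_Mapping.lookup (asc c p) k = c * Poly_Mapping.lookup p k"
  by (simp add: asc_def Poly_Mapping.map.rep_eq when_def)
lemma asc_add: "asc c (p + q) = asc c p + asc c q"
  by (rule poly_mapping_eqI) (simp add: lookup_add algebra_simps)
lemma asc_zero[simp]: "asc c 0 = 0"
  by (rule poly_mapping_eqI) simp
lemma asc_asc: "asc c (asc d p) = asc (c * d) p"
  by (rule poly_mapping_eqI) simp
lemma asc_one[simp]: "asc 1 p = p"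
  by (rule poly_mapping_eqI) simp

lemma lin_sup:
  assumes "finite S" "Poly_Mapping.keys a \<subseteq> S" "\<And>n. f n 0 = 0"
  shows "(\<Sum>n\<in>Poly_Mapping.keys a. f n (Poly_Mapping.lookup a n)) = (\<Sum>n\<in>S. f n (Poly_Mapping.lookup a n))"
  by (rule sum.mono_neutral_left) (use assms in \<open>auto simp: in_keys_iff\<close>)

lemma lin_add:
  assumes "\<And>n x y. f n (x + y) = f n x + f n y" "\<And>n. f n 0 = 0"
  shows "(\<Sum>n\<in>Poly_Mapping.keys (a+b). f n (Poly_Mapping.lookup (a+b) n)) =
    (\<Sum>n\<in>Poly_Mapping.keys a. f n (Poly_Mapping.lookup a n)) + (\<Sum>n\<in>Poly_Mapping.keys b. f n (Poly_Mapping.lookup b n))"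
proof -
  let ?S = "Poly_Mapping.keys a \<union> Poly_Mapping.keys b"
  show ?thesis
    by (subst (1 2 3) lin_sup[where S = ?S]) (auto simp: keys_add assms lookup_add sum.distrib)
qed

lemma lin_single:
  assumes "f k 0 = 0"
  shows "(\<Sum>n\<in>Poly_Mapping.keys (Poly_Mapping.single k c). f n (Poly_Mapping.lookup (Poly_Mapping.single k c) n)) = f k c"
  using assms by auto

lemma all4: "(x::4) = 0 \<or> x = 1 \<or> x = 2 \<or> x = 3"
proof (cases x)
  case (of_int z)
  then have "z = 0 \<or> z = 1 \<or> z = 2 \<or> z = 3" by auto
  then show ?thesis using of_int by auto
qed
lemma UNIV4: "(UNIV :: 4 set) = {0,1,2,3}" using all4 by auto
lemma idx4_simps[simp]: "idx4 0 = 0" "idx4 1 = 1" "idx4 2 = 2" "idx4 3 = 3"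
  by (simp_all add: idx4_def bit0.Rep_0 bit0.Rep_1 bit0.Rep_numeral)
lemma less4[simp]: "(0::4) < 1" "(0::4) < 2" "(0::4) < 3" "(1::4) < 2" "(1::4) < 3" "(2::4) < 3"
  "\<not> (1::4) < 0" "\<not> (2::4) < 0" "\<not> (3::4) < 0" "\<not> (2::4) < 1" "\<not> (3::4) < 1" "\<not> (3::4) < 2"
  "\<not> (0::4) < 0" "\<not> (1::4) < 1" "\<not> (2::4) < 2" "\<not> (3::4) < 3"
  by (simp_all add: less_bit0_def bit0.Rep_0 bit0.Rep_1 bit0.Rep_numeral)

lemma neq4[simp]: "(0::4) \<noteq> 1" "(0::4) \<noteq> 2" "(0::4) \<noteq> 3" "(1::4) \<noteq> 2" "(1::4) \<noteq> 3" "(2::4) \<noteq> 3"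
  "(1::4) \<noteq> 0" "(2::4) \<noteq> 0" "(3::4) \<noteq> 0" "(2::4) \<noteq> 1" "(3::4) \<noteq> 1" "(3::4) \<noteq> 2"
  using less4 by (metis order_less_irrefl)+

lemma sum4: "(\<Sum>i\<in>(UNIV::4 set). f i) = f 0 + f 1 + f 2 + f 3"
  by (simp only: UNIV4 sum.insert finite.intros insert_iff empty_iff neq4 simp_thms sum.empty add.assoc add_0_right)
lemma sum_gt: "(\<Sum>j\<in>{j. i<j}. g j) = (\<Sum>j\<in>(UNIV::4 set). if i < j then g j else 0)"
  by (simp add: sum.If_cases Collect_conv_if)

definition sg :: "4 \<Rightarrow> 4 \<Rightarrow> real" where
  "sg a b = [[0, -1, 0, 1], [1, 0, -1, 0], [0, 1, 0, -1], [-1, 0, 1, 0]] ! idx4 a ! idx4 b"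

lemma sg_simps[simp]:
  "sg 0 0 = 0" "sg 0 1 = -1" "sg 0 2 = 0" "sg 0 3 = 1"
  "sg 1 0 = 1" "sg 1 1 = 0" "sg 1 2 = -1" "sg 1 3 = 0"
  "sg 2 0 = 0" "sg 2 1 = 1" "sg 2 2 = 0" "sg 2 3 = -1"
  "sg 3 0 = -1" "sg 3 1 = 0" "sg 3 2 = 1" "sg 3 3 = 0"
  by (simp_all add: sg_def)

lemma sg_antisym: "sg a b = - sg b a"
  using all4[of a] all4[of b] by auto
lemma sg_diag[simp]: "sg a a = 0"
  using all4[of a] by auto

lemma Rmat_cis: "Rmat \<theta> i j = cis (\<theta> * sg i j)"
  using all4[of i] all4[of j] by (auto simp: Rmat_def Let_def)

lemma prod_cis: "finite A \<Longrightarrow> (\<Prod>i\<in>A. cis (f i)) = cis (\<Sum>i\<in>A. f i)"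
  by (induction A rule: finite_induct) (auto simp: cis_mult)

definition Eph :: "mono \<Rightarrow> mono \<Rightarrow> real" where
  "Eph m n = (\<Sum>i\<in>UNIV. \<Sum>j\<in>{j. i < j}. sg i j * real (m j * n i))"

lemma phase_cis: "phase \<theta> m n = cis (\<theta> * Eph m n)"
  by (simp add: phase_def Eph_def Rmat_cis DeMoivre prod_cis sum_distrib_left algebra_simps)

definition Etw :: "4 \<Rightarrow> mono \<Rightarrow> real" where
  "Etw i n = (\<Sum>j\<in>UNIV. sg j i * real (n j))"

lemma twf_cis: "(\<Prod>j\<in>UNIV. Rmat \<theta> j i ^ n j) = cis (\<theta> * Etw i n)"
  by (simp add: Etw_def Rmat_cis DeMoivre prod_cis sum_distrib_left algebra_simps)

lemma twist_single: "twist \<theta> i (Poly_Mapping.single n c) = Poly_Mapping.single n (c * cis (\<theta> * Etw i n))"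
  unfolding twist_def twf_cis by (rule lin_single) simp
lemma twist_add: "twist \<theta> i (p + q) = twist \<theta> i p + twist \<theta> i q"
  unfolding twist_def by (rule lin_add) (auto simp: algebra_simps single_add)
lemma twist_zero[simp]: "twist \<theta> i 0 = 0"
  by (simp add: twist_def)



definition Dk :: "4 \<Rightarrow> mono \<Rightarrow> real" where
  "Dk k n = (\<Sum>j\<in>{j. k < j}. sg j k * real (n j))"

lemma P1: "Eph (\<lambda>j. m j + (if j = k then 1 else 0)) n + Dk k n = Etw k n + Eph m n"
  using all4[of k] by (auto simp: Eph_def Etw_def Dk_def sum_gt sum4 algebra_simps)

lemma P2: "Eph m (\<lambda>j. n j + (if j = k then 1 else 0)) + Dk k m = Eph m n"
  using all4[of k] by (auto simp: Eph_def Etw_def Dk_def sum_gt sum4 algebra_simps)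

lemma P3: "Etw q (\<lambda>j. n j + (if j = p then 1 else 0)) = sg p q + Etw q n"
  using all4[of p] by (auto simp: Etw_def sum4 algebra_simps)

lemma Dk_add: "Dk k (\<lambda>j. m j + n j) = Dk k m + Dk k n"
  by (simp add: Dk_def sum.distrib algebra_simps)

lemma Eph_zero[simp]: "Eph m (\<lambda>_. 0) = 0" "Eph (\<lambda>_. 0) n = 0"
  by (simp_all add: Eph_def)
lemma Etw_zero[simp]: "Etw i (\<lambda>_. 0) = 0"
  by (simp add: Etw_def)


lemma amul_unit_right[simp]: "amul \<theta> x aone = x"
  by (induction x rule: pm_induct) (auto simp: aone_def amul_single phase_cis amul_add_left)
lemma amul_unit_left[simp]: "amul \<theta> aone x = x"
  by (induction x rule: pm_induct) (auto simp: aone_def amul_single phase_cis amul_add_right)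

lemma amul_asc_right: "amul \<theta> x (asc c y) = asc c (amul \<theta> x y)"
proof (induction x rule: pm_induct)
  case (single m d)
  show ?case
    by (induction y rule: pm_induct) (auto simp: amul_single amul_add_right asc_add algebra_simps)
qed (auto simp: amul_add_left asc_add)

lemma amul_asc_left: "amul \<theta> (asc c x) y = asc c (amul \<theta> x y)"
proof (induction x rule: pm_induct)
  case (single m d)
  show ?case
    by (induction y rule: pm_induct) (auto simp: amul_single amul_add_right asc_add algebra_simps)
qed (auto simp: amul_add_left asc_add)

lemma twist_asc: "twist \<theta> i (asc c b) = asc c (twist \<theta> i b)"
  by (induction b rule: pm_induct) (auto simp: twist_single twist_add asc_add algebra_simps)

lemma twist_comm: "twist \<theta> p (twist \<theta> q b) = twist \<theta> q (twist \<theta> p b)"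
  by (induction b rule: pm_induct) (auto simp: twist_single twist_add algebra_simps)

lemma twist_aone[simp]: "twist \<theta> i aone = aone"
  by (simp add: aone_def twist_single)

definition subk :: "4 \<Rightarrow> mono \<Rightarrow> mono" where
  "subk k n = (\<lambda>j. n j - (if j = k then 1 else 0))"

definition dcf :: "real \<Rightarrow> 4 \<Rightarrow> mono \<Rightarrow> complex" where
  "dcf \<theta> k n = of_nat (n k) * cis (\<theta> * Dk k n)"

definition DD :: "real \<Rightarrow> alg \<Rightarrow> om1" where
  "DD \<theta> a = (\<lambda>k. \<Sum>n\<in>Poly_Mapping.keys a.
     Poly_Mapping.single (subk k n) (Poly_Mapping.lookup a n * dcf \<theta> k n))"

lemma DD_single: "DD \<theta> (Poly_Mapping.single n c) k = Poly_Mapping.single (subk k n) (c * dcf \<theta> k n)"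
  unfolding DD_def by (rule lin_single) simp
lemma DD_add: "DD \<theta> (a + b) = DD \<theta> a + DD \<theta> b"
  unfolding DD_def plus_fun_def by (rule ext, rule lin_add) (auto simp: algebra_simps single_add)
lemma DD_zero[simp]: "DD \<theta> 0 = 0"
  by (simp add: DD_def fun_eq_iff)
lemma DD_asc: "DD \<theta> (asc c a) = (\<lambda>i. asc c (DD \<theta> a i))"
  by (induction a rule: pm_induct) (auto simp: DD_single DD_add asc_add algebra_simps fun_eq_iff)

lemma Dk_ek[simp]: "Dk i (\<lambda>j. if j = i then 1 else 0) = 0"
  by (auto simp: Dk_def intro!: sum.neutral)

lemma DD_gen: "DD \<theta> (zgen i) = dz i"
  by (auto simp: fun_eq_iff zgen_def dz_def DD_single dcf_def subk_def aone_def)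

lemma mk_decomp: "0 < m k \<Longrightarrow> (\<lambda>j. subk k m j + (if j = k then 1 else 0)) = m"
  by (auto simp: subk_def fun_eq_iff)


lemma core:
  "DD \<theta> (amul \<theta> (Poly_Mapping.single m c) (Poly_Mapping.single n d)) k =
   amul \<theta> (DD \<theta> (Poly_Mapping.single m c) k) (twist \<theta> k (Poly_Mapping.single n d)) +
   amul \<theta> (Poly_Mapping.single m c) (DD \<theta> (Poly_Mapping.single n d) k)"
proof -
  let ?mn = "\<lambda>j. m j + n j"
  let ?A = "c*d*phase \<theta> m n * of_nat (m k) * cis(\<theta>*Dk k ?mn)"
  let ?B = "c*d*phase \<theta> m n * of_nat (n k) * cis(\<theta>*Dk k ?mn)"
  have "c * d * phase \<theta> m n * dcf \<theta> k ?mn = ?A + ?B"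
    by (simp add: dcf_def algebra_simps)
  then have L: "DD \<theta> (amul \<theta> (Poly_Mapping.single m c) (Poly_Mapping.single n d)) k =
     Poly_Mapping.single (subk k ?mn) ?A + Poly_Mapping.single (subk k ?mn) ?B"
    by (simp add: amul_single DD_single flip: single_add)
  have T1: "Poly_Mapping.single (subk k ?mn) ?A = amul \<theta> (DD \<theta> (Poly_Mapping.single m c) k) (twist \<theta> k (Poly_Mapping.single n d))"
  proof (cases "m k = 0")
    case True then show ?thesis by (simp add: DD_single dcf_def twist_single amul_single)
  next
    case False
    then have pos: "0 < m k" by simp
    let ?m' = "subk k m"
    have e: "Eph m n + Dk k n = Etw k n + Eph ?m' n"
      using P1[of ?m' k n] by (simp only: mk_decomp[of m k, OF pos])
    have idx: "subk k ?mn = (\<lambda>j. ?m' j + n j)" using False by (auto simp: subk_def fun_eq_iff)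
    have "\<theta>*(Eph m n + Dk k n) = \<theta>*(Etw k n + Eph ?m' n)" using e by simp
    then have "\<theta> * Eph m n + \<theta> * Dk k ?mn = \<theta> * Dk k m + \<theta> * Etw k n + \<theta> * Eph ?m' n"
      by (simp add: Dk_add algebra_simps)
    then have "phase \<theta> m n * cis(\<theta>*Dk k ?mn) = cis(\<theta>*Dk k m) * cis(\<theta>*Etw k n) * phase \<theta> ?m' n"
      by (simp add: phase_cis cis_mult)
    then show ?thesis
      by (simp add: DD_single dcf_def twist_single amul_single idx algebra_simps)
  qed
  have T2: "Poly_Mapping.single (subk k ?mn) ?B = amul \<theta> (Poly_Mapping.single m c) (DD \<theta> (Poly_Mapping.single n d) k)"
  proof (cases "n k = 0")
    case True then show ?thesis by (simp add: DD_single dcf_def twist_single amul_single)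
  next
    case False
    then have pos: "0 < n k" by simp
    let ?n' = "subk k n"
    have e: "Eph m n + Dk k m = Eph m ?n'"
      using P2[of m ?n' k] by (simp only: mk_decomp[of n k, OF pos])
    have idx: "subk k ?mn = (\<lambda>j. m j + ?n' j)" using False by (auto simp: subk_def fun_eq_iff)
    have "\<theta>*(Eph m n + Dk k m) = \<theta>*(Eph m ?n')" using e by simp
    then have "\<theta> * Eph m n + \<theta> * Dk k ?mn = \<theta> * Dk k n + \<theta> * Eph m ?n'"
      by (simp add: Dk_add algebra_simps)
    then have "phase \<theta> m n * cis(\<theta>*Dk k ?mn) = cis(\<theta>*Dk k n) * phase \<theta> m ?n'"
      by (simp add: phase_cis cis_mult)
    then show ?thesis
      by (simp add: DD_single dcf_def amul_single idx algebra_simps)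
  qed
  show ?thesis using L T1 T2 by simp
qed

lemma DD_leibniz:
  "DD \<theta> (amul \<theta> a b) k = amul \<theta> (DD \<theta> a k) (twist \<theta> k b) + amul \<theta> a (DD \<theta> b k)"
proof (induction a rule: pm_induct)
  case (single m c)
  show ?case
    by (induction b rule: pm_induct) (auto simp: core amul_add_right DD_add twist_add)
qed (auto simp: amul_add_left DD_add)

lemma DD_twist:
  "DD \<theta> (twist \<theta> q a) p = asc (Rmat \<theta> p q) (twist \<theta> q (DD \<theta> a p))"
proof (induction a rule: pm_induct)
  case (single n c)
  show ?case
  proof (cases "n p = 0")
    case True then show ?thesis by (simp add: DD_single dcf_def twist_single)
  next
    case False
    then have pos: "0 < n p" by simp
    have e: "Etw q n = sg p q + Etw q (subk p n)"
      using P3[of q "subk p n" p] by (simp only: mk_decomp[of n p, OF pos])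
    then have "cis (\<theta> * Etw q n) = Rmat \<theta> p q * cis (\<theta> * Etw q (subk p n))"
      by (simp add: Rmat_cis cis_mult algebra_simps)
    then show ?thesis by (simp add: DD_single dcf_def twist_single algebra_simps)
  qed
qed (auto simp: twist_add DD_add asc_add)


definition Pd :: "real \<Rightarrow> (alg \<Rightarrow> om1) \<Rightarrow> bool" where
  "Pd \<theta> d \<longleftrightarrow> (\<forall>i. d (zgen i) = dz i)
       \<and> (\<forall>a b. d (amul \<theta> a b) = ract1 \<theta> (d a) b + lact1 \<theta> a (d b))
       \<and> (\<forall>a b. d (a + b) = d a + d b)
       \<and> (\<forall>c a. d (asc c a) = (\<lambda>i. asc c (d a i)))"

lemma Pd_DD: "Pd \<theta> (DD \<theta>)"
  unfolding Pd_def
  by (auto simp: DD_gen DD_add DD_asc fun_eq_iff ract1_def lact1_def DD_leibniz)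

lemma ract1_aone[simp]: "ract1 \<theta> w aone = w"
  by (simp add: ract1_def)
lemma lact1_aone[simp]: "lact1 \<theta> aone w = w"
  by (simp add: lact1_def)

lemma Pd_zero: assumes "Pd \<theta> d" shows "d 0 = 0"
proof -
  have "d (0 + 0) = d 0 + d 0" using assms unfolding Pd_def by blast
  then show ?thesis by simp
qed

lemma Pd_aone: assumes "Pd \<theta> d" shows "d aone = 0"
proof -
  have "d (amul \<theta> aone aone) = ract1 \<theta> (d aone) aone + lact1 \<theta> aone (d aone)"
    using assms unfolding Pd_def by blast
  then show ?thesis by simp
qed

lemma Pd_asc: "Pd \<theta> d \<Longrightarrow> d (asc c a) = (\<lambda>i. asc c (d a i))"
  unfolding Pd_def by blast

lemma asc_cancel:
  assumes "c \<noteq> 0" "asc c x = asc c y" shows "x = y"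
proof -
  show ?thesis
  proof (rule poly_mapping_eqI)
    fix k
    have "Poly_Mapping.lookup (asc c x) k = Poly_Mapping.lookup (asc c y) k" using assms(2) by simp
    then show "Poly_Mapping.lookup x k = Poly_Mapping.lookup y k" using assms(1) by simp
  qed
qed

lemma uniq_mon:
  assumes d: "Pd \<theta> d" and d': "Pd \<theta> d'"
  shows "d (Poly_Mapping.single m 1) = d' (Poly_Mapping.single m 1)"
proof (induction "sum m UNIV" arbitrary: m)
  case 0
  then have "m = (\<lambda>_. 0)" by (auto simp: fun_eq_iff)
  then show ?case using Pd_aone[OF d] Pd_aone[OF d'] by (simp add: aone_def)
next
  case (Suc N)
  then obtain k where pos: "0 < m k" by (metis sum.neutral neq0_conv nat.distinct(1))
  let ?m' = "subk k m"
  have "sum m UNIV = sum ?m' UNIV + 1"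
  proof -
    have "sum m UNIV = sum (\<lambda>j. ?m' j + (if j = k then 1 else 0)) UNIV"
      by (simp only: mk_decomp[of m k, OF pos])
    also have "\<dots> = sum ?m' UNIV + 1" by (simp add: sum.distrib)
    finally show ?thesis .
  qed
  then have IH: "d (Poly_Mapping.single ?m' 1) = d' (Poly_Mapping.single ?m' 1)"
    using Suc by simp
  have "amul \<theta> (zgen k) (Poly_Mapping.single ?m' 1)
        = asc (phase \<theta> (\<lambda>j. if j = k then 1 else 0) ?m') (Poly_Mapping.single m 1)"
  proof -
    have "(\<lambda>j. (if j = k then 1 else 0) + ?m' j) = m"
      using mk_decomp[of m k, OF pos] by (simp add: fun_eq_iff add.commute)
    then show ?thesis by (simp add: zgen_def amul_single)
  qed
  moreover have "d (amul \<theta> (zgen k) (Poly_Mapping.single ?m' 1)) = d' (amul \<theta> (zgen k) (Poly_Mapping.single ?m' 1))"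
    using d d' IH by (simp add: Pd_def)
  ultimately have "d (asc (phase \<theta> (\<lambda>j. if j = k then 1 else 0) ?m') (Poly_Mapping.single m 1))
     = d' (asc (phase \<theta> (\<lambda>j. if j = k then 1 else 0) ?m') (Poly_Mapping.single m 1))"
    by (simp only:)
  then have "(\<lambda>i. asc (phase \<theta> (\<lambda>j. if j = k then 1 else 0) ?m') (d (Poly_Mapping.single m 1) i))
      = (\<lambda>i. asc (phase \<theta> (\<lambda>j. if j = k then 1 else 0) ?m') (d' (Poly_Mapping.single m 1) i))"
    by (simp only: Pd_asc[OF d] Pd_asc[OF d'])
  then show ?case
    by (auto simp: fun_eq_iff phase_cis intro: asc_cancel[of "cis _"])
qed

lemma uniq:
  assumes d: "Pd \<theta> d" and d': "Pd \<theta> d'"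
  shows "d a = d' a"
proof (induction a rule: pm_induct)
  case zero then show ?case using Pd_zero[OF d] Pd_zero[OF d'] by simp
next
  case (single k c)
  have "d (asc c (Poly_Mapping.single k 1)) = d' (asc c (Poly_Mapping.single k 1))"
    by (simp only: Pd_asc[OF d] Pd_asc[OF d'] uniq_mon[OF d d'])
  then show ?case by simp
next
  case (add a b) then show ?case using d d' by (simp add: Pd_def)
qed

lemma dA_DD: "dA \<theta> = DD \<theta>"
proof -
  have "(THE d. Pd \<theta> d) = DD \<theta>"
    by (rule the_equality[of "Pd \<theta>", OF Pd_DD]) (rule ext, rule uniq, assumption, rule Pd_DD)
  then show ?thesis by (simp add: dA_def Pd_def)
qed


lemma amul_if_r: "amul \<theta> x (if P then y else 0) = (if P then amul \<theta> x y else 0)" by simp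
lemma amul_if_l: "amul \<theta> (if P then y else 0) x = (if P then amul \<theta> y x else 0)" by simp
lemma twist_if: "twist \<theta> i (if P then y else 0) = (if P then twist \<theta> i y else 0)" by simp
lemma asc_if: "asc c (if P then y else 0) = (if P then asc c y else 0)" by simp

lemma tens_eq: "tens \<theta> w v p q = amul \<theta> (w p) (twist \<theta> p (v q))"
  by (simp add: tens_def ract1_def)

lemma nablaR_eq: "nablaR \<theta> w p q = DD \<theta> (w q) p"
proof -
  have "nablaR \<theta> w p q = (\<Sum>i\<in>UNIV. if q = i then DD \<theta> (w i) p else 0)"
    unfolding nablaR_def dA_DD by (rule sum.cong) (auto simp: tens_eq dz_def)
  then show ?thesis by simp
qed

lemma sigmaR_eq: "sigmaR \<theta> X p q = asc (Rmat \<theta> p q) (X q p)"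
proof -
  have "sigmaR \<theta> X p q = (\<Sum>i\<in>UNIV. if i = q then (\<Sum>j\<in>UNIV. if j = p then asc (Rmat \<theta> p q) (X q p) else 0) else 0)"
    unfolding sigmaR_def
    by (intro sum.cong refl) (auto simp: lact2_def asc2_def tens_eq dz_def amul_asc_right amul_if_r amul_if_l asc_if twist_if)
  then show ?thesis by simp
qed

lemma ract2_eq: "ract2 \<theta> X b p q = amul \<theta> (X p q) (twist \<theta> p (twist \<theta> q b))"
proof -
  have "ract2 \<theta> X b p q = (\<Sum>i\<in>UNIV. if i = p then (\<Sum>j\<in>UNIV. if j = q then amul \<theta> (X p q) (twist \<theta> p (twist \<theta> q b)) else 0) else 0)"
    unfolding ract2_def
    by (intro sum.cong refl) (auto simp: lact1_def ract1_def tens_eq dz_def amul_if_r amul_if_l asc_if twist_if)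
  then show ?thesis by simp
qed

lemma Rmat_nz: "Rmat \<theta> p q \<noteq> 0"
  by (simp add: Rmat_cis)

theorem lemma4p3:
  fixes \<theta> :: real
  shows "bimodule_connection \<theta> (nablaR \<theta>) (sigmaR \<theta>)"
proof -
  define g where "g X = (\<lambda>p q. asc (inverse (Rmat \<theta> q p)) (X q p))" for X :: om2
  have sg1: "sigmaR \<theta> \<circ> g = id"
    by (auto simp: fun_eq_iff g_def sigmaR_eq asc_asc Rmat_nz)
  have sg2: "g \<circ> sigmaR \<theta> = id"
    by (auto simp: fun_eq_iff g_def sigmaR_eq asc_asc Rmat_nz)
  have bij: "bij (sigmaR \<theta>)"
    using o_bij[OF sg2 sg1] .
  show ?thesis
    unfolding bimodule_connection_def
  proof (intro conjI allI bij)
    show "nablaR \<theta> (v + w) = nablaR \<theta> v + nablaR \<theta> w" for v w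
      by (simp add: fun_eq_iff nablaR_eq DD_add)
    show "nablaR \<theta> (asc1 c v) = asc2 c (nablaR \<theta> v)" for c v
      by (simp add: fun_eq_iff nablaR_eq asc1_def asc2_def DD_asc)
    show "sigmaR \<theta> (X + Y) = sigmaR \<theta> X + sigmaR \<theta> Y" for X Y
      by (simp add: fun_eq_iff sigmaR_eq asc_add)
    show "sigmaR \<theta> (lact2 \<theta> a X) = lact2 \<theta> a (sigmaR \<theta> X)" for a X
      by (simp add: fun_eq_iff sigmaR_eq lact2_def amul_asc_right)
    show "sigmaR \<theta> (ract2 \<theta> X a) = ract2 \<theta> (sigmaR \<theta> X) a" for a X
      by (simp add: fun_eq_iff sigmaR_eq ract2_eq amul_asc_left twist_comm)
    show "nablaR \<theta> (lact1 \<theta> a v) = lact2 \<theta> a (nablaR \<theta> v) + tens \<theta> (dA \<theta> a) v" for a v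
      by (simp add: fun_eq_iff nablaR_eq lact1_def lact2_def tens_eq dA_DD DD_leibniz add.commute)
    show "nablaR \<theta> (ract1 \<theta> v a) = ract2 \<theta> (nablaR \<theta> v) a + sigmaR \<theta> (tens \<theta> v (dA \<theta> a))" for a v
      by (simp add: fun_eq_iff nablaR_eq ract1_def ract2_eq sigmaR_eq tens_eq dA_DD DD_leibniz DD_twist amul_asc_right)
  qed
qed

end
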